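(* Let $\Omega=\{\Omega_1,\dots,\Omega_N\}$ be a finite set of points with distance function $d$, let $1\le n<N$, and let $i,j\in\{1,\dots,n\}$. Let $x_1=MMJ(\Omega_i,\Omega_j~|~\Omega_{[1,n]})$, $t_1=MMJ(\Omega_{n+1},\Omega_i~|~\Omega_{[1,n+1]})$, $t_2=MMJ(\Omega_{n+1},\Omega_j~|~\Omega_{[1,n+1]})$ and $x_2=\max(t_1,t_2)$. Then $MMJ(\Omega_i,\Omega_j~|~\Omega_{[1,n+1]})=\min(x_1,x_2)$.
   Context: $\Omega$ is a finite set of points indexed $\Omega_1,\dots,\Omega_N$, and $\Omega_{[1,n]}=\{\Omega_1,\dots,\Omega_n\}$. $d:\Omega\times\Omega\to[0,\infty)$ is a distance function (e.g. Euclidean distance), symmetric with $d(x,x)=0$. For a subset $S\subseteq\Omega$, a path from $i$ to $j$ in $S$ is a finite sequence of points of $S$ (at least two) starting at $i$ and ending at $j$, with no repeated points except that start and end may coincide when $i=j$. A jump of a path is the distance $d(x,y)$ between two consecutive points $x,y$, and $max\_jump$ of a path is its largest jump. The Min-Max-Jump distance with context $S$ is $MMJ(i,j~|~S)=\min\{max\_jump(\epsilon): \epsilon \text{ a path from } i \text{ to } j \text{ in } S\}$ for $i,j\in S$, with $MMJ(i,i~|~S)=0$. *)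

theory Defs
  imports Complex_Main
begin

definition is_path :: "'a set \<Rightarrow> 'a \<Rightarrow> 'a \<Rightarrow> 'a list \<Rightarrow> bool" where
  "is_path S i j xs \<longleftrightarrow> length xs \<ge> 2 \<and> set xs \<subseteq> S \<and> hd xs = i \<and> last xs = j
     \<and> distinct (tl xs) \<and> distinct (butlast xs)"

definition max_jump :: "('a \<Rightarrow> 'a \<Rightarrow> real) \<Rightarrow> 'a list \<Rightarrow> real" where
  "max_jump d xs = Max (set (map2 d (butlast xs) (tl xs)))"

definition MMJ :: "('a \<Rightarrow> 'a \<Rightarrow> real) \<Rightarrow> 'a \<Rightarrow> 'a \<Rightarrow> 'a set \<Rightarrow> real" where
  "MMJ d i j S = (if i = j then 0 else Min {max_jump d xs | xs. is_path S i j xs})"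

end

theory Submission
  imports Defs
begin

fun jl :: "('a \<Rightarrow> 'a \<Rightarrow> real) \<Rightarrow> 'a list \<Rightarrow> real list" where
  "jl d (x#y#zs) = d x y # jl d (y#zs)"
| "jl d _ = []"

lemma map2_jl: "map2 d (butlast xs) (tl xs) = jl d xs"
  by (induction d xs rule: jl.induct) auto

lemma jl_append: "jl d (us @ x # vs) = jl d (us @ [x]) @ jl d (x # vs)"
proof (induction us)
  case Nil then show ?case by simp
next
  case (Cons u us) then show ?case by (cases us) auto
qed

lemma jl_rev:
  assumes sym: "\<And>x y. d x y = d y x"
  shows "set (jl d (rev xs)) = set (jl d xs)"
proof (induction xs)
  case Nil then show ?case by simp
next
  case (Cons x xs)
  show ?case
  proof (cases xs)
    case Nil then show ?thesis by simp
  next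
    case (Cons z zs)
    have "rev (x#xs) = rev zs @ z # [x]" using Cons by simp
    then have "jl d (rev (x#xs)) = jl d (rev zs @ [z]) @ jl d [z, x]"
      using jl_append[of d "rev zs" z "[x]"] by simp
    also have "\<dots> = jl d (rev xs) @ [d z x]" using Cons by simp
    finally show ?thesis using Cons \<open>set (jl d (rev xs)) = set (jl d xs)\<close> sym by auto
  qed
qed

lemma jl_nonempty: "length xs \<ge> 2 \<Longrightarrow> jl d xs \<noteq> []"
proof (cases xs)
  case (Cons x ys) assume "length xs \<ge> 2"
  then show ?thesis using Cons by (cases ys) auto
qed simp

lemma max_jump_le:
  assumes "length xs \<ge> 2"
  shows "(max_jump d xs \<le> t) \<longleftrightarrow> (\<forall>v\<in>set (jl d xs). v \<le> t)"
  unfolding max_jump_def map2_jl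
  using jl_nonempty[OF assms, of d] by (simp add: Max_le_iff)

lemma walk_to_path:
  assumes "a \<noteq> b" "xs \<noteq> []" "hd xs = a" "last xs = b" "set xs \<subseteq> S"
    "\<forall>v\<in>set (jl d xs). v \<le> t"
  shows "\<exists>ys. is_path S a b ys \<and> (\<forall>v\<in>set (jl d ys). v \<le> t)"
  using assms
proof (induction "length xs" arbitrary: xs rule: less_induct)
  case (less xs)
  show ?case
  proof (cases "distinct xs")
    case True
    have "length xs \<ge> 2"
    proof (rule ccontr)
      assume "\<not> length xs \<ge> 2"
      with less.prems(2) obtain x where "xs = [x]" by (cases xs) (auto simp: Suc_le_eq)
      with less.prems show False by simp
    qed
    then have "is_path S a b xs" using True less.prems
      unfolding is_path_def by (auto simp: distinct_tl distinct_butlast)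
    then show ?thesis using less.prems by blast
  next
    case False
    then obtain us x vs ws where xs: "xs = us @ [x] @ vs @ [x] @ ws"
      using not_distinct_decomp by blast
    define ys where "ys = us @ x # ws"
    have len: "length ys < length xs" using xs ys_def by simp
    have ne: "ys \<noteq> []" using ys_def by simp
    have hd: "hd ys = a" using less.prems(3) xs ys_def by (cases us) auto
    have lst: "last ys = b" using less.prems(4) xs ys_def by (cases ws) auto
    have st: "set ys \<subseteq> S" using less.prems(5) xs ys_def by auto
    have j1: "jl d xs = jl d (us @ [x]) @ jl d (x # vs @ x # ws)"
      using xs jl_append[of d us x "vs @ x # ws"] by simp
    have j2: "jl d (x # vs @ x # ws) = jl d (x # vs @ [x]) @ jl d (x # ws)"
      using jl_append[of d "x # vs" x ws] by simp
    have j3: "jl d ys = jl d (us @ [x]) @ jl d (x # ws)"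
      using ys_def jl_append[of d us x ws] by simp
    have "\<forall>v\<in>set (jl d ys). v \<le> t" using less.prems(6) j1 j2 j3 by auto
    then show ?thesis using less.hyps[OF len _ ne hd lst st] less.prems(1) by blast
  qed
qed

lemma paths_finite:
  assumes "finite S"
  shows "finite {xs. is_path S a b xs}"
proof -
  have "{xs. is_path S a b xs} \<subseteq> {xs. set xs \<subseteq> S \<and> length xs \<le> card S + 1}"
  proof
    fix xs assume "xs \<in> {xs. is_path S a b xs}"
    then have p: "is_path S a b xs" by simp
    then have "card (set (tl xs)) = length (tl xs)" unfolding is_path_def
      using distinct_card by blast
    moreover have "set (tl xs) \<subseteq> S" using p unfolding is_path_def
      by (cases xs) auto
    ultimately have "length (tl xs) \<le> card S" using card_mono[OF assms] by metis
    then show "xs \<in> {xs. set xs \<subseteq> S \<and> length xs \<le> card S + 1}" using p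
      unfolding is_path_def by auto
  qed
  then show ?thesis using finite_lists_length_le[OF assms] finite_subset by blast
qed

lemma MMJ_le_iff:
  assumes "a \<noteq> b" "finite S" "a \<in> S" "b \<in> S"
  shows "MMJ d a b S \<le> t \<longleftrightarrow> (\<exists>ys. is_path S a b ys \<and> (\<forall>v\<in>set (jl d ys). v \<le> t))"
proof -
  have eq: "{max_jump d xs | xs. is_path S a b xs} = max_jump d ` {xs. is_path S a b xs}" by auto
  have fin: "finite {max_jump d xs | xs. is_path S a b xs}"
    unfolding eq using paths_finite[OF assms(2)] by simp
  have "is_path S a b [a, b]" using assms unfolding is_path_def by auto
  then have ne: "{max_jump d xs | xs. is_path S a b xs} \<noteq> {}" by blast
  have "MMJ d a b S \<le> t \<longleftrightarrow> (\<exists>xs. is_path S a b xs \<and> max_jump d xs \<le> t)"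
    unfolding MMJ_def using assms(1) Min_le_iff[OF fin ne] by auto
  also have "\<dots> \<longleftrightarrow> (\<exists>ys. is_path S a b ys \<and> (\<forall>v\<in>set (jl d ys). v \<le> t))"
    using max_jump_le unfolding is_path_def by metis
  finally show ?thesis .
qed

lemma MMJ_nonneg:
  assumes "\<And>x y. d x y \<ge> 0" "finite S" "a \<in> S" "b \<in> S"
  shows "0 \<le> MMJ d a b S"
proof (cases "a = b")
  case True then show ?thesis unfolding MMJ_def by simp
next
  case False
  then obtain ys where p: "is_path S a b ys" and le: "\<forall>v\<in>set (jl d ys). v \<le> MMJ d a b S"
    using MMJ_le_iff[OF False assms(2-4), of d "MMJ d a b S"] by auto
  have "length ys \<ge> 2" using p unfolding is_path_def by simp
  then obtain v where "v \<in> set (jl d ys)" using jl_nonempty[of ys d] by (cases "jl d ys") auto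
  moreover have "\<forall>v\<in>set (jl d ys). 0 \<le> v"
    using assms(1) unfolding map2_jl[symmetric] by auto
  ultimately show ?thesis using le by fastforce
qed

theorem theorem3p5:
  fixes \<Omega> :: "nat \<Rightarrow> 'a" and d :: "'a \<Rightarrow> 'a \<Rightarrow> real" and N n i j :: nat
  assumes inj: "inj_on \<Omega> {1..N}"
    and d_nonneg: "\<And>x y. d x y \<ge> 0"
    and d_sym: "\<And>x y. d x y = d y x"
    and d_refl: "\<And>x. d x x = 0"
    and n: "1 \<le> n" "n < N"
    and i: "i \<in> {1..n}" and j: "j \<in> {1..n}"
  shows "MMJ d (\<Omega> i) (\<Omega> j) (\<Omega> ` {1..n+1}) =
     min (MMJ d (\<Omega> i) (\<Omega> j) (\<Omega> ` {1..n}))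
         (max (MMJ d (\<Omega> (n+1)) (\<Omega> i) (\<Omega> ` {1..n+1}))
              (MMJ d (\<Omega> (n+1)) (\<Omega> j) (\<Omega> ` {1..n+1})))"
proof -
  define S where "S = \<Omega> ` {1..n}"
  define S' where "S' = \<Omega> ` {1..n+1}"
  define p where "p = \<Omega> (n+1)"
  define a where "a = \<Omega> i"
  define b where "b = \<Omega> j"
  have S': "S' = insert p S" unfolding S'_def S_def p_def by (auto simp: atLeastAtMostSuc_conv)
  have pS: "p \<notin> S"
  proof
    assume "p \<in> S"
    then obtain k where "k \<in> {1..n}" "\<Omega> k = \<Omega> (n+1)" unfolding S_def p_def by auto
    with inj n show False by (auto dest: inj_onD)
  qed
  have fS: "finite S" "finite S'" unfolding S_def S'_def by auto
  have aS: "a \<in> S" "b \<in> S" using i j unfolding a_def b_def S_def by auto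
  then have aS': "a \<in> S'" "b \<in> S'" "p \<in> S'" using S' by auto
  have pa: "p \<noteq> a" "p \<noteq> b" using pS aS by auto
  show ?thesis
  proof (cases "i = j")
    case True
    have "0 \<le> MMJ d p a S'" using MMJ_nonneg[OF d_nonneg fS(2) aS'(3) aS'(1)] .
    have ab: "a = b" using True unfolding a_def b_def by simp
    have z: "MMJ d a b S' = 0" "MMJ d a b S = 0" using ab unfolding MMJ_def by auto
    have "MMJ d a b S' = min (MMJ d a b S) (max (MMJ d p a S') (MMJ d p b S'))"
      unfolding z using \<open>0 \<le> MMJ d p a S'\<close> by linarith
    then show ?thesis unfolding S_def S'_def p_def a_def b_def .
  next
    case False
    then have ab: "a \<noteq> b" using inj i j n unfolding a_def b_def
      by (auto dest: inj_onD)
    have key: "MMJ d a b S' \<le> t \<longleftrightarrow>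
       (MMJ d a b S \<le> t \<or> (MMJ d p a S' \<le> t \<and> MMJ d p b S' \<le> t))" for t
    proof
      assume "MMJ d a b S' \<le> t"
      then obtain P where P: "is_path S' a b P" and ok: "\<forall>v\<in>set (jl d P). v \<le> t"
        using MMJ_le_iff[OF ab fS(2) aS'(1,2)] by blast
      show "MMJ d a b S \<le> t \<or> (MMJ d p a S' \<le> t \<and> MMJ d p b S' \<le> t)"
      proof (cases "p \<in> set P")
        case False
        then have "is_path S a b P" using P S' unfolding is_path_def by auto
        then show ?thesis using ok MMJ_le_iff[OF ab fS(1) aS] by blast
      next
        case True
        then obtain k where k: "k < length P" "P ! k = p" by (meson in_set_conv_nth)
        define U where "U = take k P"
        define V where "V = drop (Suc k) P"
        have PUV: "P = U @ p # V"
          using id_take_nth_drop[OF k(1)] unfolding k(2) U_def V_def .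
        have jP: "jl d P = jl d (U @ [p]) @ jl d (p # V)"
          unfolding PUV by (rule jl_append)
        have Pset: "set P \<subseteq> S'" "hd P = a" "last P = b" using P unfolding is_path_def by auto
        have w1: "\<exists>ys. is_path S' p a ys \<and> (\<forall>v\<in>set (jl d ys). v \<le> t)"
        proof (rule walk_to_path[of p a "rev (U @ [p])"])
          show "hd (rev (U @ [p])) = p" by simp
          show "last (rev (U @ [p])) = a" using Pset(2) PUV by (cases U) auto
          show "set (rev (U @ [p])) \<subseteq> S'" using Pset(1) PUV by auto
          show "\<forall>v\<in>set (jl d (rev (U @ [p]))). v \<le> t"
          proof -
            have e: "set (jl d (rev (U @ [p]))) = set (jl d (U @ [p]))"
              by (rule jl_rev[of d "U @ [p]", OF d_sym])
            have "set (jl d (U @ [p])) \<subseteq> set (jl d P)" using jP by simp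
            then show ?thesis using e ok by blast
          qed
        qed (use pa in auto)
        have w2: "\<exists>ys. is_path S' p b ys \<and> (\<forall>v\<in>set (jl d ys). v \<le> t)"
        proof (rule walk_to_path[of p b "p # V"])
          show "last (p # V) = b" using Pset(3) PUV by simp
          show "set (p # V) \<subseteq> S'" using Pset(1) PUV by auto
          show "\<forall>v\<in>set (jl d (p # V)). v \<le> t" using ok jP by auto
        qed (use pa in auto)
        show ?thesis using w1 w2 MMJ_le_iff[OF pa(1) fS(2) aS'(3) aS'(1)]
            MMJ_le_iff[OF pa(2) fS(2) aS'(3) aS'(2)] by blast
      qed
    next
      assume "MMJ d a b S \<le> t \<or> (MMJ d p a S' \<le> t \<and> MMJ d p b S' \<le> t)"
      then show "MMJ d a b S' \<le> t"
      proof
        assume "MMJ d a b S \<le> t"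
        then obtain P where P: "is_path S a b P" and ok: "\<forall>v\<in>set (jl d P). v \<le> t"
          using MMJ_le_iff[OF ab fS(1) aS] by blast
        have "is_path S' a b P" using P S' unfolding is_path_def by auto
        then show ?thesis using ok MMJ_le_iff[OF ab fS(2) aS'(1,2)] by blast
      next
        assume "MMJ d p a S' \<le> t \<and> MMJ d p b S' \<le> t"
        then obtain P1 P2 where P1: "is_path S' p a P1" and ok1: "\<forall>v\<in>set (jl d P1). v \<le> t"
          and P2: "is_path S' p b P2" and ok2: "\<forall>v\<in>set (jl d P2). v \<le> t"
          using MMJ_le_iff[OF pa(1) fS(2) aS'(3) aS'(1)]
            MMJ_le_iff[OF pa(2) fS(2) aS'(3) aS'(2)] by blast
        have P1c: "P1 = p # tl P1" "tl P1 \<noteq> []" "last P1 = a"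
          using P1 unfolding is_path_def by (cases P1; auto)+
        have P2c: "P2 = p # tl P2" "tl P2 \<noteq> []" "last P2 = b"
          using P2 unfolding is_path_def by (cases P2; auto)+
        define R where "R = rev (tl P1)"
        define V where "V = tl P2"
        have R: "rev P1 = R @ [p]" unfolding R_def by (subst P1c(1)) simp
        have V: "P2 = p # V" "V \<noteq> []" unfolding V_def using P2c by auto
        define W where "W = R @ p # V"
        have "\<exists>ys. is_path S' a b ys \<and> (\<forall>v\<in>set (jl d ys). v \<le> t)"
        proof (rule walk_to_path[of a b W])
          have "W = rev P1 @ V" unfolding W_def R by simp
          moreover have "rev P1 \<noteq> []" using P1c(1) by (metis list.distinct(1) rev_is_Nil_conv)
          ultimately have "hd W = hd (rev P1)" by simp
          then show "hd W = a" using P1c(3) by (simp add: hd_rev)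
          show "last W = b" using P2 V unfolding W_def is_path_def by simp
          have "set (rev P1) \<subseteq> S'" using P1 unfolding is_path_def by simp
          then show "set W \<subseteq> S'" using P2 V R unfolding W_def is_path_def by auto
          have "jl d W = jl d (rev P1) @ jl d P2" unfolding W_def V(1) R by (rule jl_append)
          moreover have e: "set (jl d (rev P1)) = set (jl d P1)"
            by (rule jl_rev[of d P1, OF d_sym])
          ultimately show "\<forall>v\<in>set (jl d W). v \<le> t" using ok1 ok2 by auto
        qed (use ab W_def in auto)
        then show ?thesis using MMJ_le_iff[OF ab fS(2) aS'(1,2)] by blast
      qed
    qed
    have "MMJ d a b S' = min (MMJ d a b S) (max (MMJ d p a S') (MMJ d p b S'))"
    proof -
      have key2: "MMJ d a b S' \<le> t \<longleftrightarrow> min (MMJ d a b S) (max (MMJ d p a S') (MMJ d p b S')) \<le> t" for t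
        by (simp only: key min_le_iff_disj max.bounded_iff)
      show ?thesis
      proof (rule order.antisym)
        show "MMJ d a b S' \<le> min (MMJ d a b S) (max (MMJ d p a S') (MMJ d p b S'))"
          using key2[of "min (MMJ d a b S) (max (MMJ d p a S') (MMJ d p b S'))"] by blast
        show "min (MMJ d a b S) (max (MMJ d p a S') (MMJ d p b S')) \<le> MMJ d a b S'"
          using key2[of "MMJ d a b S'"] by blast
      qed
    qed
    then show ?thesis unfolding S_def S'_def p_def a_def b_def .
  qed
qed

end
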